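(* Let $S=(s_{ij})$ be a real matrix of order $n+1$ and $C=(c_{ij})$ a real matrix of order $n$, with spectra (counted with multiplicities) $\sigma(S)=(\lambda_1,\ldots,\lambda_{n+1})$ and $\sigma(C)=(\mu_1,\ldots,\mu_n)$. Suppose $s_{ij}\ge|c_{ij}|$ for $1\le i,j\le n$, $s_{i,n+1}\ge0$ for $i=1,\ldots,n+1$, and let $\varphi^{(1)}_{n+1,i},\varphi^{(2)}_{n+1,i}\ge0$ ($i=1,\ldots,n$) satisfy $\varphi^{(1)}_{n+1,i}+\varphi^{(2)}_{n+1,i}=s_{n+1,i}$. Then for every $0\le\gamma\le1$, the nonnegative $(2n+1)\times(2n+1)$ matrices $M_{\pm\gamma}$ defined as follows have spectra $(\lambda_1,\ldots,\lambda_{n+1},\pm\gamma\mu_1,\ldots,\pm\gamma\mu_n)$ respectively: for $1\le i,j\le n$, the entries of $M_{\pm\gamma}$ in rows $2i-1,2i$ and columns $2j-1,2j$ form the block $\begin{pmatrix}\frac{s_{ij}\pm\gamma c_{ij}}{2}&\frac{s_{ij}\mp\gamma c_{ij}}{2}\\ \frac{s_{ij}\mp\gamma c_{ij}}{2}&\frac{s_{ij}\pm\gamma c_{ij}}{2}\end{pmatrix}$; the entries in rows $2i-1,2i$ and column $2n+1$ are both $s_{i,n+1}$; the entries in row $2n+1$ and columns $2j-1,2j$ are $\varphi^{(1)}_{n+1,j},\varphi^{(2)}_{n+1,j}$; and the $(2n+1,2n+1)$ entry is $s_{n+1,n+1}$.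
   Context: Spectra are counted with multiplicities. Nonnegative means entrywise nonnegative. *)

theory Defs
  imports "Jordan_Normal_Form.Char_Poly"
begin

definition spec :: "real mat \<Rightarrow> complex multiset" where
  "spec A = proots (char_poly (map_mat complex_of_real A))"

definition nonneg_mat :: "real mat \<Rightarrow> bool" where
  "nonneg_mat A \<longleftrightarrow> (\<forall>i < dim_row A. \<forall>j < dim_col A. A $$ (i, j) \<ge> 0)"

text \<open>The matrix M_{eps*gamma} (eps = 1 or -1), 0-based indices: paper rows 2i-1,2i
  (i=1..n) are rows 2i, 2i+1 (i=0..n-1); paper row/column 2n+1 is index 2n.\<close>
definition Mgam :: "nat \<Rightarrow> real mat \<Rightarrow> real mat \<Rightarrow> (nat \<Rightarrow> real) \<Rightarrow> (nat \<Rightarrow> real)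
    \<Rightarrow> real \<Rightarrow> real \<Rightarrow> real mat" where
  "Mgam n S C phi1 phi2 eps \<gamma> = mat (2*n+1) (2*n+1) (\<lambda>(r, c).
     if r = 2*n \<and> c = 2*n then S $$ (n, n)
     else if r = 2*n then (if even c then phi1 (c div 2) else phi2 (c div 2))
     else if c = 2*n then S $$ (r div 2, n)
     else if even r = even c then (S $$ (r div 2, c div 2) + eps * \<gamma> * C $$ (r div 2, c div 2)) / 2
     else (S $$ (r div 2, c div 2) - eps * \<gamma> * C $$ (r div 2, c div 2)) / 2)"

end

theory Submission
  imports Defs "Jordan_Normal_Form.Jordan_Normal_Form_Existence"
begin

lemma sum_pairs: fixes n :: nat shows "(\<Sum>t<2*n+1. f t) = (\<Sum>j<n. f (2*j) + f (2*j+1)) + (f (2*n)::'a::comm_monoid_add)"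
proof (induction n)
  case 0 then show ?case by simp
next
  case (Suc n)
  have e: "2 * Suc n + 1 = Suc (Suc (2*n+1))" by simp
  show ?case unfolding e lessThan_Suc sum.insert[OF finite_lessThan] using Suc
    by (simp add: algebra_simps)
qed

lemma sum_three: fixes n :: nat shows "(\<Sum>t<2*n+1. f t) = (\<Sum>j<n. f j) + f n + (\<Sum>j<n. (f (n+1+j)::'a::comm_monoid_add))"
proof -
  have "(\<Sum>t<2*n+1. f t) = (\<Sum>t<n+1. f t) + (\<Sum>t\<in>{n+1..<2*n+1}. f t)"
    by (metis atLeast0LessThan le_add2 sum.atLeastLessThan_concat zero_le mult_2 add.commute add.left_commute)
  also have "(\<Sum>t\<in>{n+1..<2*n+1}. f t) = (\<Sum>j<n. f (n+1+j))"
    by (rule sum.reindex_bij_witness[where j="\<lambda>t. t - (n+1)" and i="\<lambda>j. n+1+j"]) auto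
  finally show ?thesis by simp
qed

lemma mult_mat_entry: "i < m \<Longrightarrow> j < l \<Longrightarrow> (mat m k fa * mat k l fb) $$ (i,j) = (\<Sum>t<k. fa (i,t) * fb (t,j))"
  by (auto simp add: scalar_prod_def lessThan_atLeast0 intro!: sum.cong)


lemma idx_cases: fixes n r :: nat assumes "r < 2*n+1"
  obtains "r = 2*n" | q where "q < n" "r = 2*q" | q where "q < n" "r = 2*q+1"
proof -
  have "r = 2*(r div 2) + r mod 2" by simp
  then show ?thesis using assms that by (cases "r mod 2 = 0"; cases "r div 2 < n"; auto; presburger)
qed

lemma blk_cases: fixes n k :: nat assumes "k < 2*n+1"
  obtains "k < n" | "k = n" | j where "j < n" "k = n+1+j"
proof -
  consider "k < n" | "k = n" | "k > n" by linarith
  then show ?thesis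
  proof cases
    case 3 then have "k = n+1+(k-(n+1))" "k-(n+1) < n" using assms by auto
    then show ?thesis using that(3) by blast
  qed (use that in auto)
qed


definition pf :: "nat \<Rightarrow> nat \<times> nat \<Rightarrow> real" where
 "pf n = (\<lambda>(r,k). if k < n then (if r < 2*n \<and> r div 2 = k then 1 else 0)
    else if k = n then (if r = 2*n then 1 else 0)
    else if r < 2*n \<and> r div 2 = k - Suc n then (if even r then 1 else -1) else 0)"

definition qf :: "nat \<Rightarrow> nat \<times> nat \<Rightarrow> real" where
 "qf n = (\<lambda>(k,r). if k < n then (if r < 2*n \<and> r div 2 = k then 1/2 else 0)
    else if k = n then (if r = 2*n then 1 else 0)
    else if r < 2*n \<and> r div 2 = k - Suc n then (if even r then 1/2 else -1/2) else 0)"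

lemma if_zero_mult: "(if P then a else 0) * b = (if P then a*b else (0::'a::mult_zero))" by simp
lemma odd_even_ne[simp]: "2*(q::nat) \<noteq> Suc (2*p)" "Suc (2*q) \<noteq> 2*p" by presburger+
lemma mult_if_zero: "b * (if P then a else 0) = (if P then b*a else (0::'a::mult_zero))" by simp
lemma if_zero_add: "(if P then a else 0) + (if P then b else 0) = (if P then a+b else (0::'a::monoid_add))" by simp
lemma ev2[simp]: "even (2*(j::nat))" "\<not> even (Suc (2*j))" by auto
lemmas dsimps = if_zero_add if_zero_mult mult_if_zero sum.delta sum.delta'

lemma PQ: "mat (2*n+1) (2*n+1) (pf n) * mat (2*n+1) (2*n+1) (qf n) = 1\<^sub>m (2*n+1)"
proof (rule eq_matI)
  fix r s assume r: "r < dim_row (1\<^sub>m (2*n+1))" and s: "s < dim_col (1\<^sub>m (2*n+1))"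
  then have r: "r < 2*n+1" and s: "s < 2*n+1" by auto
  have "(mat (2*n+1) (2*n+1) (pf n) * mat (2*n+1) (2*n+1) (qf n)) $$ (r,s)
    = (\<Sum>t<2*n+1. pf n (r,t) * qf n (t,s))" using r s by (rule mult_mat_entry)
  also have "\<dots> = 1\<^sub>m (2*n+1) $$ (r,s)" unfolding sum_three
    using r s by (cases rule: idx_cases[OF r]; cases rule: idx_cases[OF s]) (auto simp: pf_def qf_def dsimps)
  finally show "(mat (2*n+1) (2*n+1) (pf n) * mat (2*n+1) (2*n+1) (qf n)) $$ (r,s) = 1\<^sub>m (2*n+1) $$ (r,s)" .
qed auto

lemma QP: "mat (2*n+1) (2*n+1) (qf n) * mat (2*n+1) (2*n+1) (pf n) = 1\<^sub>m (2*n+1)"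
proof (rule eq_matI)
  fix r s assume r: "r < dim_row (1\<^sub>m (2*n+1))" and s: "s < dim_col (1\<^sub>m (2*n+1))"
  then have r: "r < 2*n+1" and s: "s < 2*n+1" by auto
  have "(mat (2*n+1) (2*n+1) (qf n) * mat (2*n+1) (2*n+1) (pf n)) $$ (r,s)
    = (\<Sum>t<2*n+1. qf n (r,t) * pf n (t,s))" using r s by (rule mult_mat_entry)
  also have "\<dots> = 1\<^sub>m (2*n+1) $$ (r,s)" unfolding sum_pairs
    using r s by (cases rule: blk_cases[OF r]; cases rule: blk_cases[OF s]) (auto simp: pf_def qf_def dsimps)
  finally show "(mat (2*n+1) (2*n+1) (qf n) * mat (2*n+1) (2*n+1) (pf n)) $$ (r,s) = 1\<^sub>m (2*n+1) $$ (r,s)" .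
qed auto

definition mf :: "nat \<Rightarrow> real mat \<Rightarrow> real mat \<Rightarrow> (nat \<Rightarrow> real) \<Rightarrow> (nat \<Rightarrow> real) \<Rightarrow> real \<Rightarrow> nat \<times> nat \<Rightarrow> real" where
  "mf n S C phi1 phi2 a = (\<lambda>(r, c).
     if r = 2*n \<and> c = 2*n then S $$ (n, n)
     else if r = 2*n then (if even c then phi1 (c div 2) else phi2 (c div 2))
     else if c = 2*n then S $$ (r div 2, n)
     else if even r = even c then (S $$ (r div 2, c div 2) + a * C $$ (r div 2, c div 2)) / 2
     else (S $$ (r div 2, c div 2) - a * C $$ (r div 2, c div 2)) / 2)"

lemma Mgam_mf: "Mgam n S C phi1 phi2 eps \<gamma> = mat (2*n+1) (2*n+1) (mf n S C phi1 phi2 (eps*\<gamma>))"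
  unfolding Mgam_def mf_def by (simp add: mult.assoc)

definition bf :: "nat \<Rightarrow> real mat \<Rightarrow> real mat \<Rightarrow> (nat \<Rightarrow> real) \<Rightarrow> (nat \<Rightarrow> real) \<Rightarrow> real \<Rightarrow> nat \<times> nat \<Rightarrow> real" where
  "bf n S C phi1 phi2 a = (\<lambda>(i, j). if i \<le> n \<and> j \<le> n then S $$ (i,j)
     else if i \<le> n then (if i = n then phi1 (j - Suc n) - phi2 (j - Suc n) else 0)
     else if j \<le> n then 0 else a * C $$ (i - Suc n, j - Suc n))"

lemma MP: assumes phi: "\<forall>i < n. phi1 i + phi2 i = S $$ (n, i)"
  shows "mat (2*n+1) (2*n+1) (mf n S C phi1 phi2 a) * mat (2*n+1) (2*n+1) (pf n)
   = mat (2*n+1) (2*n+1) (pf n) * mat (2*n+1) (2*n+1) (bf n S C phi1 phi2 a)" (is "?L = ?R")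
proof (rule eq_matI)
  fix r s assume r: "r < dim_row ?R" and s: "s < dim_col ?R"
  then have r: "r < 2*n+1" and s: "s < 2*n+1" by auto
  have "?L $$ (r,s) = (\<Sum>t<2*n+1. mf n S C phi1 phi2 a (r,t) * pf n (t,s))" using r s by (rule mult_mat_entry)
  also have "\<dots> = (\<Sum>t<2*n+1. pf n (r,t) * bf n S C phi1 phi2 a (t,s))"
    apply (subst sum_pairs, subst sum_three)
    using r s phi by (cases rule: idx_cases[OF r]; cases rule: blk_cases[OF s]) (auto simp: pf_def mf_def bf_def dsimps add_divide_distrib[symmetric] diff_divide_distrib[symmetric])
  also have "\<dots> = ?R $$ (r,s)" using r s by (rule mult_mat_entry[symmetric])
  finally show "?L $$ (r,s) = ?R $$ (r,s)" .
qed auto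


lemma char_poly_four_block_lower_zero: fixes A1 :: "'a :: idom mat"
  assumes A1: "A1 \<in> carrier_mat n n"
  and A2: "A2 \<in> carrier_mat n m" and A3: "A3 \<in> carrier_mat m m"
  shows "char_poly (four_block_mat A1 A2 (0\<^sub>m m n) A3) = char_poly A1 * char_poly A3"
proof -
  let ?cm = "\<lambda> A. [:0, 1:] \<cdot>\<^sub>m 1\<^sub>m (dim_row A) +
         map_mat (\<lambda>a. [:- a:]) A"
  let ?B2 = "map_mat (\<lambda>a. [:- a:]) A2"
  have "char_poly (four_block_mat A1 A2 (0\<^sub>m m n) A3) = det (?cm (four_block_mat A1 A2 (0\<^sub>m m n) A3))"
    unfolding char_poly_defs using A1 A3 by simp
  also have "?cm (four_block_mat A1 A2 (0\<^sub>m m n) A3) = four_block_mat (?cm A1) ?B2 (0\<^sub>m m n) (?cm A3)"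
    by (rule eq_matI, insert A1 A2 A3, auto simp: one_poly_def)
  also have "det \<dots> = det (?cm A1) * det (?cm A3)"
    by (rule det_four_block_mat_lower_left_zero[OF _ _ refl], insert A1 A2 A3, auto)
  also have "\<dots> = char_poly A1 * char_poly A3" unfolding char_poly_defs ..
  finally show ?thesis .
qed

lemma char_poly_nz: "A \<in> carrier_mat n n \<Longrightarrow> char_poly A \<noteq> 0"
  using degree_monic_char_poly[of A n] by auto

lemma proots_cp_smult: fixes A :: "complex mat"
  assumes A: "A \<in> carrier_mat n n"
  shows "proots (char_poly (k \<cdot>\<^sub>m A)) = image_mset (\<lambda>\<mu>. k * \<mu>) (proots (char_poly A))"
proof (cases "k = 0")
  case True
  have z: "0 \<cdot>\<^sub>m A = 0\<^sub>m n n" by (rule eq_matI) (use A in auto)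
  have "char_poly (0\<^sub>m n n :: complex mat) = (\<Prod> a \<leftarrow> diag_mat (0\<^sub>m n n). [:- a, 1:])"
    by (rule char_poly_upper_triangular[of _ n]) (auto simp: upper_triangular_def)
  also have "diag_mat (0\<^sub>m n n :: complex mat) = replicate n 0" 
    by (auto simp: diag_mat_def intro!: nth_equalityI)
  finally have cp: "char_poly (0\<^sub>m n n :: complex mat) = [:0,1:] ^ n" by (simp add: prod_list_replicate)
  have sz: "size (proots (char_poly A)) = n"
    using size_proots_complex degree_monic_char_poly[OF A] by simp
  show ?thesis unfolding True z cp
    by (simp add: proots_power image_mset_const_eq sz)
next
  case False
  show ?thesis
  proof (rule multiset_eqI)
    fix x
    have pre: "(\<lambda>\<mu>. k * \<mu>) -` {x} = {x/k}" using False by (auto simp: field_simps)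
    have "count (image_mset (\<lambda>\<mu>. k * \<mu>) (proots (char_poly A))) x = count (proots (char_poly A)) (x/k)"
      unfolding count_image_mset pre by (auto simp: Int_insert_left count_eq_zero_iff)
    also have "\<dots> = order (x/k) (char_poly A)" using char_poly_nz[OF A] by simp
    also have "\<dots> = order x (char_poly (k \<cdot>\<^sub>m A))" using order_char_poly_smult[OF A False] by simp
    also have "\<dots> = count (proots (char_poly (k \<cdot>\<^sub>m A))) x"
      using char_poly_nz[of "k \<cdot>\<^sub>m A" n] A by simp
    finally show "count (proots (char_poly (k \<cdot>\<^sub>m A))) x = count (image_mset (\<lambda>\<mu>. k * \<mu>) (proots (char_poly A))) x" by simp
  qed
qed


theorem theorem6:
  fixes n :: nat and S C :: "real mat" and phi1 phi2 :: "nat \<Rightarrow> real" and \<gamma> :: real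
  assumes S: "S \<in> carrier_mat (n+1) (n+1)"
    and C: "C \<in> carrier_mat n n"
    and SC: "\<forall>i < n. \<forall>j < n. S $$ (i, j) \<ge> \<bar>C $$ (i, j)\<bar>"
    and Scol: "\<forall>i \<le> n. S $$ (i, n) \<ge> 0"
    and phi: "\<forall>i < n. phi1 i \<ge> 0 \<and> phi2 i \<ge> 0 \<and> phi1 i + phi2 i = S $$ (n, i)"
    and gam: "0 \<le> \<gamma>" "\<gamma> \<le> 1"
  shows "\<forall>eps \<in> {1, -1::real}.
           nonneg_mat (Mgam n S C phi1 phi2 eps \<gamma>) \<and>
           spec (Mgam n S C phi1 phi2 eps \<gamma>)
             = spec S + image_mset (\<lambda>\<mu>. complex_of_real (eps * \<gamma>) * \<mu>) (spec C)"
proof (intro ballI conjI)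
  fix eps :: real assume e: "eps \<in> {1,-1}"
  define a where "a = eps*\<gamma>"
  have aabs: "\<bar>a\<bar> \<le> 1" using e gam by (auto simp: a_def)
  define Mr where "Mr = mat (2*n+1) (2*n+1) (mf n S C phi1 phi2 a)"
  have M: "Mgam n S C phi1 phi2 eps \<gamma> = Mr" unfolding a_def Mr_def by (rule Mgam_mf)
  have ineq: "0 \<le> S $$ (q,p) + a * C $$ (q,p) \<and> 0 \<le> S $$ (q,p) - a * C $$ (q,p) \<and> a * C $$ (q,p) \<le> S $$ (q,p)" if "q < n" "p < n" for q p
  proof -
    have "\<bar>a * C $$ (q,p)\<bar> \<le> \<bar>C $$ (q,p)\<bar>" unfolding abs_mult
      using aabs by (simp add: mult_left_le_one_le)
    moreover have "\<bar>C $$ (q,p)\<bar> \<le> S $$ (q,p)" using SC that by auto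
    ultimately show ?thesis by linarith
  qed
  show "nonneg_mat (Mgam n S C phi1 phi2 eps \<gamma>)"
    unfolding M nonneg_mat_def
  proof (intro allI impI)
    fix r c assume "r < dim_row Mr" "c < dim_col Mr"
    then have r: "r < 2*n+1" and c: "c < 2*n+1" by (auto simp: Mr_def)
    show "0 \<le> Mr $$ (r,c)" unfolding Mr_def using r c
      by (cases rule: idx_cases[OF r]; cases rule: idx_cases[OF c]) (auto simp: mf_def ineq phi Scol)
  qed
  define P where "P = mat (2*n+1) (2*n+1) (pf n)"
  define Q where "Q = mat (2*n+1) (2*n+1) (qf n)"
  define B where "B = mat (2*n+1) (2*n+1) (bf n S C phi1 phi2 a)"
  define Y where "Y = mat (n+1) n (\<lambda>(i,j). if i = n then phi1 j - phi2 j else 0)"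
  have car: "{Mr, B, P, Q} \<subseteq> carrier_mat (2*n+1) (2*n+1)" by (auto simp: Mr_def B_def P_def Q_def)
  have PQ': "P * Q = 1\<^sub>m (2*n+1)" unfolding P_def Q_def by (rule PQ)
  have QP': "Q * P = 1\<^sub>m (2*n+1)" unfolding P_def Q_def by (rule QP)
  have MP': "Mr * P = P * B" unfolding Mr_def P_def B_def by (rule MP) (use phi in auto)
  have "Mr = Mr * (P * Q)" using car by (simp add: PQ' Mr_def)
  also have "\<dots> = (Mr * P) * Q" using car by (intro assoc_mult_mat[symmetric]) auto
  also have "\<dots> = P * B * Q" unfolding MP' ..
  finally have "Mr = P * B * Q" .
  then have sim: "similar_mat Mr B" using car PQ' QP' by (intro similar_matI) auto
  have Beq: "B = four_block_mat S Y (0\<^sub>m n (n+1)) (a \<cdot>\<^sub>m C)"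
    by (rule eq_matI) (use S C in \<open>auto simp: B_def Y_def bf_def\<close>)
  have cpM: "char_poly Mr = char_poly S * char_poly (a \<cdot>\<^sub>m C)"
    unfolding char_poly_similar[OF sim] Beq
    by (rule char_poly_four_block_lower_zero) (use S C in \<open>auto simp: Y_def\<close>)
  have aCc: "a \<cdot>\<^sub>m C \<in> carrier_mat n n" using C by simp
  interpret mp: map_poly_comm_ring_hom complex_of_real ..
  have cM: "Mr \<in> carrier_mat (2*n+1) (2*n+1)" using car by auto
  have "spec Mr = proots (map_poly complex_of_real (char_poly Mr))"
    unfolding spec_def of_real_hom.char_poly_hom[OF cM] ..
  also have "\<dots> = proots (char_poly (map_mat complex_of_real S) * char_poly (map_mat complex_of_real (a \<cdot>\<^sub>m C)))"
    unfolding cpM mp.hom_mult of_real_hom.char_poly_hom[OF S] of_real_hom.char_poly_hom[OF aCc] ..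
  also have "\<dots> = spec S + proots (char_poly (map_mat complex_of_real (a \<cdot>\<^sub>m C)))"
    unfolding spec_def by (rule proots_mult; rule char_poly_nz) (use S C in auto)
  also have "map_mat complex_of_real (a \<cdot>\<^sub>m C) = complex_of_real a \<cdot>\<^sub>m map_mat complex_of_real C"
    by (rule eq_matI) auto
  also have "proots (char_poly \<dots>) = image_mset (\<lambda>\<mu>. complex_of_real a * \<mu>) (spec C)"
    unfolding spec_def by (rule proots_cp_smult) (use C in auto)
  finally show "spec (Mgam n S C phi1 phi2 eps \<gamma>) = spec S + image_mset (\<lambda>\<mu>. complex_of_real (eps * \<gamma>) * \<mu>) (spec C)"
    unfolding M a_def .
qed


end
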